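(* Let $\Omega\subset\mathbb{R}^n$ be a domain, $\mathcal{S}$ any basis of shapes in $\Omega$, $1\le p<\infty$, and $f_1,f_2$ real-valued functions in $\mathrm{BMO}^p_{\mathcal{S}}(\Omega)$. Then $\max(f_1,f_2)$ and $\min(f_1,f_2)$ belong to $\mathrm{BMO}^p_{\mathcal{S}}(\Omega)$ with $$\|\max(f_1,f_2)\|_{\mathrm{BMO}^p_{\mathcal{S}}}\le\frac{1+c_{|\cdot|}(p,\mathcal{S})}{2}\big(\|f_1\|_{\mathrm{BMO}^p_{\mathcal{S}}}+\|f_2\|_{\mathrm{BMO}^p_{\mathcal{S}}}\big),$$ and the same bound for $\|\min(f_1,f_2)\|_{\mathrm{BMO}^p_{\mathcal{S}}}$.
   Context: A domain is an open connected set. A shape is an open set with $0<|S|<\infty$; a basis of shapes in $\Omega$ is a collection of shapes contained in $\Omega$ covering $\Omega$. For $f\in L^1(S)$, $f_S=\frac1{|S|}\int_Sf$. $\mathrm{BMO}^p_{\mathcal{S}}(\Omega)$ is the space of $f$ with $f\in L^1(S)$ for all $S\in\mathcal{S}$ and $\|f\|_{\mathrm{BMO}^p_{\mathcal{S}}}:=\sup_{S\in\mathcal{S}}\big(\frac1{|S|}\int_S|f-f_S|^p\big)^{1/p}<\infty$. $c_{|\cdot|}(p,\mathcal{S})$ denotes the smallest constant $c$ such that $\||f|\|_{\mathrm{BMO}^p_{\mathcal{S}}}\le c\|f\|_{\mathrm{BMO}^p_{\mathcal{S}}}$ for all real-valued $f\in\mathrm{BMO}^p_{\mathcal{S}}(\Omega)$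 (it is known that $1\le c_{|\cdot|}(p,\mathcal{S})\le2$). *)

theory Defs
  imports "HOL-Analysis.Analysis"
begin

definition is_domain :: "'a::euclidean_space set \<Rightarrow> bool" where
  "is_domain \<Omega> \<longleftrightarrow> open \<Omega> \<and> connected \<Omega> \<and> \<Omega> \<noteq> {}"

definition is_shape :: "'a::euclidean_space set \<Rightarrow> bool" where
  "is_shape S \<longleftrightarrow> open S \<and> 0 < emeasure lebesgue S \<and> emeasure lebesgue S < \<infinity>"

definition basis_of_shapes :: "'a::euclidean_space set set \<Rightarrow> 'a set \<Rightarrow> bool" where
  "basis_of_shapes \<SS> \<Omega> \<longleftrightarrow> (\<forall>S\<in>\<SS>. is_shape S \<and> S \<subseteq> \<Omega>) \<and> \<Union>\<SS> = \<Omega>"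

definition avg :: "'a::euclidean_space set \<Rightarrow> ('a \<Rightarrow> real) \<Rightarrow> real" where
  "avg S f = (LINT x:S|lebesgue. f x) / measure lebesgue S"

definition mean_osc :: "real \<Rightarrow> 'a::euclidean_space set \<Rightarrow> ('a \<Rightarrow> real) \<Rightarrow> ennreal" where
  "mean_osc p S f = (\<integral>\<^sup>+ x\<in>S. ennreal (\<bar>f x - avg S f\<bar> powr p) \<partial>lebesgue) / emeasure lebesgue S"

definition in_BMO :: "real \<Rightarrow> 'a::euclidean_space set set \<Rightarrow> ('a \<Rightarrow> real) \<Rightarrow> bool" where
  "in_BMO p \<SS> f \<longleftrightarrow> (\<forall>S\<in>\<SS>. set_integrable lebesgue S f) \<and>
     (\<exists>C::real. \<forall>S\<in>\<SS>. mean_osc p S f \<le> ennreal C)"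

text \<open>The BMO^p_S seminorm (meaningful for f in BMO^p_S and nonempty basis).\<close>
definition BMO_norm :: "real \<Rightarrow> 'a::euclidean_space set set \<Rightarrow> ('a \<Rightarrow> real) \<Rightarrow> real" where
  "BMO_norm p \<SS> f = (SUP S\<in>\<SS>. enn2real (mean_osc p S f) powr (1 / p))"

definition c_abs :: "real \<Rightarrow> 'a::euclidean_space set set \<Rightarrow> real" where
  "c_abs p \<SS> = Inf {c. \<forall>f. in_BMO p \<SS> f \<longrightarrow>
       BMO_norm p \<SS> (\<lambda>x. \<bar>f x\<bar>) \<le> c * BMO_norm p \<SS> f}"

end

theory Submission imports Defs begin
lemma powr_le_self: fixes a p :: real assumes "0 \<le> a" "a \<le> 1" "1 \<le> p" shows "a powr p \<le> a"
  by (metis assms(1,2,3) powr_mono' powr_one_gt_zero_iff)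

lemma powr_conv:
  fixes x y t p :: real
  assumes p: "1 \<le> p" and xy: "0 \<le> x" "0 \<le> y" and t: "0 \<le> t" "t \<le> 1"
  shows "(t*x + (1-t)*y) powr p \<le> t * x powr p + (1-t) * y powr p"
proof (cases "x = 0 \<or> y = 0")
  case True
  then show ?thesis
  proof
    assume x0: "x = 0"
    have "((1-t)*y) powr p = (1-t) powr p * y powr p" using t xy by (simp add: powr_mult)
    also have "\<dots> \<le> (1-t) * y powr p" using t p by (intro mult_right_mono powr_le_self) auto
    finally show ?thesis using x0 p by simp
  next
    assume y0: "y = 0"
    have "(t*x) powr p = t powr p * x powr p" using t xy by (simp add: powr_mult)
    also have "\<dots> \<le> t * x powr p" using t p by (intro mult_right_mono powr_le_self) auto
    finally show ?thesis using y0 p by simp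
  qed
next
  case False
  then have "x > 0" "y > 0" using xy by auto
  with convex_onD[OF powr_convex[OF p], of t y x] t
  show ?thesis by (simp add: algebra_simps)
qed

lemma mink_pt:
  fixes u v A B p :: real
  assumes p: "1 \<le> p" and uv: "0 \<le> u" "0 \<le> v" and AB: "0 < A" "0 < B"
  shows "(u+v) powr p \<le> ((A+B) powr p * (A/(A+B)) / A powr p) * u powr p
                         + ((A+B) powr p * (B/(A+B)) / B powr p) * v powr p"
proof -
  define t where "t = A/(A+B)"
  have t: "0 \<le> t" "t \<le> 1" using AB by (auto simp: t_def)
  have 1: "1 - t = B/(A+B)" using AB by (simp add: t_def field_simps)
  have a: "t*(u/A) = u/(A+B)" using AB by (simp add: t_def)
  have b: "(1-t)*(v/B) = v/(A+B)" using AB by (simp add: 1)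
  have "(u+v) powr p = (A+B) powr p * ((u+v)/(A+B)) powr p"
    using AB uv by (simp add: powr_divide)
  also have "((u+v)/(A+B)) = t*(u/A) + (1-t)*(v/B)" by (simp only: a b add_divide_distrib)
  also have "(A+B) powr p * (t*(u/A) + (1-t)*(v/B)) powr p \<le> (A+B) powr p * (t * (u/A) powr p + (1-t) * (v/B) powr p)"
    using AB uv t p by (intro mult_left_mono powr_conv) auto
  also have "\<dots> = ((A+B) powr p * (A/(A+B)) / A powr p) * u powr p
                         + ((A+B) powr p * (B/(A+B)) / B powr p) * v powr p"
    using AB uv by (simp add: powr_divide 1 t_def field_simps)
  finally show ?thesis .
qed

definition PI :: "real \<Rightarrow> 'a measure \<Rightarrow> ('a \<Rightarrow> real) \<Rightarrow> ennreal" where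
  "PI p M g = (\<integral>\<^sup>+x. ennreal (\<bar>g x\<bar> powr p) \<partial>M)"

definition nrm :: "real \<Rightarrow> 'a measure \<Rightarrow> ('a \<Rightarrow> real) \<Rightarrow> real" where
  "nrm p M g = enn2real (PI p M g) powr (1/p)"

lemma mink_PI:
  assumes g: "g \<in> borel_measurable M" and h: "h \<in> borel_measurable M"
    and p: "1 \<le> p" and AB: "0 < A" "0 < B"
    and gA: "PI p M g \<le> ennreal (A powr p)" and hB: "PI p M h \<le> ennreal (B powr p)"
  shows "PI p M (\<lambda>x. g x + h x) \<le> ennreal ((A+B) powr p)"
proof -
  define cg where "cg = (A+B) powr p * (A/(A+B)) / A powr p"
  define ch where "ch = (A+B) powr p * (B/(A+B)) / B powr p"
  have cg: "cg \<ge> 0" and ch: "ch \<ge> 0" using AB by (auto simp: cg_def ch_def)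
  have pt: "\<bar>g x + h x\<bar> powr p \<le> cg * \<bar>g x\<bar> powr p + ch * \<bar>h x\<bar> powr p" for x
  proof -
    have "\<bar>g x + h x\<bar> powr p \<le> (\<bar>g x\<bar> + \<bar>h x\<bar>) powr p"
      using p by (intro powr_mono2) auto
    also have "\<dots> \<le> cg * \<bar>g x\<bar> powr p + ch * \<bar>h x\<bar> powr p"
      unfolding cg_def ch_def using mink_pt[OF p _ _ AB] by simp
    finally show ?thesis .
  qed
  have "PI p M (\<lambda>x. g x + h x) \<le> (\<integral>\<^sup>+x. ennreal cg * ennreal (\<bar>g x\<bar> powr p) + ennreal ch * ennreal (\<bar>h x\<bar> powr p) \<partial>M)"
    unfolding PI_def
    by (intro nn_integral_mono) (use pt cg ch in \<open>simp add: ennreal_plus[symmetric] ennreal_mult[symmetric] del: ennreal_plus\<close>)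
  also have "\<dots> = ennreal cg * PI p M g + ennreal ch * PI p M h"
    unfolding PI_def using g h
    by (subst nn_integral_add) (auto simp: nn_integral_cmult)
  also have "\<dots> \<le> ennreal cg * ennreal (A powr p) + ennreal ch * ennreal (B powr p)"
    by (intro add_mono mult_left_mono gA hB) auto
  also have "\<dots> = ennreal (cg * A powr p + ch * B powr p)"
    using cg ch by (simp add: ennreal_mult ennreal_plus)
  also have "cg * A powr p + ch * B powr p = (A+B) powr p"
  proof -
    have "cg * A powr p = (A+B) powr p * (A/(A+B))" using AB by (simp add: cg_def)
    moreover have "ch * B powr p = (A+B) powr p * (B/(A+B))" using AB by (simp add: ch_def)
    moreover have "A/(A+B) + B/(A+B) = 1" using AB by (simp add: add_divide_distrib[symmetric])
    ultimately show ?thesis by (metis distrib_left mult.right_neutral)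
  qed
  finally show ?thesis .
qed

lemma nrm_nonneg: "nrm p M g \<ge> 0" by (simp add: nrm_def)

lemma PI_fin_eq:
  assumes "PI p M g < \<infinity>" "p > 0"
  shows "PI p M g = ennreal (nrm p M g powr p)"
  using assms by (simp add: nrm_def powr_powr)

lemma nrm_le_of_PI:
  assumes "PI p M g \<le> ennreal (A powr p)" "A \<ge> 0" "p > 0"
  shows "nrm p M g \<le> A"
proof -
  have "enn2real (PI p M g) \<le> A powr p"
    using assms enn2real_mono[OF assms(1)] by simp
  then have "enn2real (PI p M g) powr (1/p) \<le> (A powr p) powr (1/p)"
    by (intro powr_mono2) (use assms in auto)
  then show ?thesis using assms by (simp add: nrm_def powr_powr)
qed

lemma PI_le_of_nrm:
  assumes "PI p M g < \<infinity>" "nrm p M g \<le> A" "p > 0"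
  shows "PI p M g \<le> ennreal (A powr p)"
proof -
  have "nrm p M g powr p \<le> A powr p"
    using assms nrm_nonneg by (intro powr_mono2) auto
  then show ?thesis using PI_fin_eq[OF assms(1,3)] by (simp add: ennreal_leI)
qed

lemma nrm_triangle:
  assumes g: "g \<in> borel_measurable M" and h: "h \<in> borel_measurable M"
    and p: "1 \<le> p" and fg: "PI p M g < \<infinity>" and fh: "PI p M h < \<infinity>"
  shows "PI p M (\<lambda>x. g x + h x) < \<infinity> \<and> nrm p M (\<lambda>x. g x + h x) \<le> nrm p M g + nrm p M h"
proof -
  have key: "PI p M (\<lambda>x. g x + h x) \<le> ennreal ((nrm p M g + e + (nrm p M h + e)) powr p)" if e: "e > 0" for e
  proof (rule mink_PI[OF g h p])
    show "0 < nrm p M g + e" "0 < nrm p M h + e" using e nrm_nonneg[of p M] by (auto intro: add_nonneg_pos)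
    show "PI p M g \<le> ennreal ((nrm p M g + e) powr p)" using fg p e by (intro PI_le_of_nrm) auto
    show "PI p M h \<le> ennreal ((nrm p M h + e) powr p)" using fh p e by (intro PI_le_of_nrm) auto
  qed
  have fin: "PI p M (\<lambda>x. g x + h x) < \<infinity>"
    using key[of 1] by (simp add: order_le_less_trans)
  have "nrm p M (\<lambda>x. g x + h x) \<le> nrm p M g + nrm p M h + e" if e: "e > 0" for e
  proof -
    have "nrm p M (\<lambda>x. g x + h x) \<le> nrm p M g + e/2 + (nrm p M h + e/2)"
      using key[of "e/2"] e p nrm_nonneg[of p M] by (intro nrm_le_of_PI) auto
    then show ?thesis by simp
  qed
  then show ?thesis using fin field_le_epsilon by blast
qed

lemma PI_mono:
  assumes "\<And>x. x \<in> space M \<Longrightarrow> \<bar>g x\<bar> \<le> \<bar>h x\<bar>" "p \<ge> 0"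
  shows "PI p M g \<le> PI p M h"
  unfolding PI_def using assms by (intro nn_integral_mono ennreal_leI powr_mono2) auto

lemma nrm_mono:
  assumes "\<And>x. x \<in> space M \<Longrightarrow> \<bar>g x\<bar> \<le> \<bar>h x\<bar>" "p > 0" "PI p M h < \<infinity>"
  shows "nrm p M g \<le> nrm p M h"
proof -
  have "PI p M g \<le> PI p M h" using assms by (intro PI_mono) auto
  then have "enn2real (PI p M g) \<le> enn2real (PI p M h)" using assms by (intro enn2real_mono) (auto simp: top_unique)
  then show ?thesis unfolding nrm_def using assms by (intro powr_mono2) auto
qed

lemma PI_scale:
  assumes "g \<in> borel_measurable M" "p > 0"
  shows "PI p M (\<lambda>x. c * g x) = ennreal (\<bar>c\<bar> powr p) * PI p M g"
  unfolding PI_def using assms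
  by (simp add: abs_mult powr_mult ennreal_mult nn_integral_cmult)

lemma nrm_scale:
  assumes "g \<in> borel_measurable M" "p > 0"
  shows "nrm p M (\<lambda>x. c * g x) = \<bar>c\<bar> * nrm p M g"
  unfolding nrm_def PI_scale[OF assms] using assms
  by (simp add: enn2real_mult powr_mult powr_powr)

lemma PI_const:
  shows "PI p M (\<lambda>x. k) = ennreal (\<bar>k\<bar> powr p) * emeasure M (space M)"
  unfolding PI_def by (simp add: nn_integral_const)

lemma nrm_const:
  assumes "emeasure M (space M) < \<infinity>" "p > 0"
  shows "nrm p M (\<lambda>x. k) = \<bar>k\<bar> * measure M (space M) powr (1/p)"
  unfolding nrm_def PI_const using assms
  by (simp add: enn2real_mult powr_mult powr_powr measure_def)

lemma young1:
  fixes t p :: real assumes "t \<ge> 0" "p \<ge> 1"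
  shows "t \<le> t powr p / p + (1 - 1/p)"
proof (cases "t = 0")
  case True then show ?thesis using assms by (simp add: field_simps)
next
  case False
  then have "t > 0" using assms by auto
  have "(t powr p) powr (1/p) * 1 powr (1 - 1/p) \<le> (1/p) * t powr p + (1 - 1/p) * 1"
    using assms \<open>t > 0\<close> by (intro Youngs_inequality_0) (auto simp: field_simps)
  then show ?thesis using assms \<open>t > 0\<close> by (simp add: powr_powr)
qed

lemma L1_bound:
  assumes g: "g \<in> borel_measurable M" and p: "1 \<le> p"
    and fin: "emeasure M (space M) < \<infinity>" and pos: "emeasure M (space M) > 0"
    and fg: "PI p M g < \<infinity>"
  shows "(\<integral>\<^sup>+x. ennreal \<bar>g x\<bar> \<partial>M) \<le> ennreal (nrm p M g * measure M (space M) powr (1 - 1/p))"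
proof -
  define \<mu> where "\<mu> = measure M (space M)"
  define n where "n = nrm p M g"
  have em: "emeasure M (space M) = ennreal \<mu>" using fin by (simp add: \<mu>_def emeasure_eq_ennreal_measure)
  have mu: "\<mu> > 0" using pos em by auto
  have n0: "n \<ge> 0" by (simp add: n_def nrm_nonneg)
  define X where "X = (\<integral>\<^sup>+x. ennreal \<bar>g x\<bar> \<partial>M)"
  have key: "X \<le> ennreal ((n + e) * \<mu> powr (1 - 1/p))" if e: "e > 0" for e
  proof -
    define L where "L = (n + e) * \<mu> powr (- 1/p)"
    have L: "L > 0" using e n0 mu by (simp add: L_def add_nonneg_pos)
    define a where "a = L / (p * L powr p)"
    have a: "a \<ge> 0" using L p by (simp add: a_def)
    have c0: "L * (1 - 1/p) \<ge> 0" using L p by (simp add: field_simps)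
    have pt: "\<bar>g x\<bar> \<le> a * \<bar>g x\<bar> powr p + L * (1 - 1/p)" for x
    proof -
      have "\<bar>g x\<bar> = L * (\<bar>g x\<bar> / L)" using L by simp
      also have "\<dots> \<le> L * ((\<bar>g x\<bar> / L) powr p / p + (1 - 1/p))"
        using L p by (intro mult_left_mono young1) auto
      also have "\<dots> = a * \<bar>g x\<bar> powr p + L * (1 - 1/p)"
        using L p by (simp add: a_def powr_divide field_simps)
      finally show ?thesis .
    qed
    have "X \<le> (\<integral>\<^sup>+x. ennreal a * ennreal (\<bar>g x\<bar> powr p) + ennreal (L * (1 - 1/p)) \<partial>M)"
      unfolding X_def
      by (intro nn_integral_mono) (use pt a c0 in \<open>simp add: ennreal_plus[symmetric] ennreal_mult[symmetric] del: ennreal_plus\<close>)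
    also have "\<dots> = ennreal a * PI p M g + ennreal (L * (1 - 1/p)) * emeasure M (space M)"
      unfolding PI_def using g
      by (subst nn_integral_add) (auto simp: nn_integral_cmult)
    also have "\<dots> \<le> ennreal a * ennreal ((n + e) powr p) + ennreal (L * (1 - 1/p)) * ennreal \<mu>"
      unfolding em using fg p e n0 by (intro add_mono mult_left_mono PI_le_of_nrm) (auto simp: n_def)
    also have "\<dots> = ennreal (a * (n + e) powr p + L * (1 - 1/p) * \<mu>)"
      using a c0 mu by (simp add: ennreal_mult ennreal_plus)
    also have "a * (n + e) powr p + L * (1 - 1/p) * \<mu> = (n + e) * \<mu> powr (1 - 1/p)"
    proof -
      have "L powr p = (n + e) powr p * \<mu> powr (-1)"
        using mu n0 e p unfolding L_def by (simp add: powr_mult powr_powr)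
      then have "(n + e) powr p = L powr p * \<mu>" using mu by (simp add: powr_minus field_simps)
      then have "a * (n + e) powr p = L * \<mu> / p" using L p by (simp add: a_def)
      then have "a * (n + e) powr p + L * (1 - 1/p) * \<mu> = L * \<mu>" using p by (simp add: field_simps)
      also have "\<dots> = (n + e) * \<mu> powr (1 - 1/p)"
        using mu by (simp add: L_def powr_diff powr_minus field_simps)
      finally show ?thesis .
    qed
    finally show ?thesis .
  qed
  have c: "\<mu> powr (1 - 1/p) > 0" using mu by simp
  have Xfin: "X < \<infinity>" using key[of 1] by (simp add: order_le_less_trans)
  have "enn2real X \<le> n * \<mu> powr (1 - 1/p) + e" if e: "e > 0" for e
  proof -
    have "X \<le> ennreal ((n + e / \<mu> powr (1 - 1/p)) * \<mu> powr (1 - 1/p))"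
      using key[of "e / \<mu> powr (1 - 1/p)"] e c by simp
    also have "(n + e / \<mu> powr (1 - 1/p)) * \<mu> powr (1 - 1/p) = n * \<mu> powr (1 - 1/p) + e"
      using c by (simp add: field_simps)
    finally have "X \<le> ennreal (n * \<mu> powr (1 - 1/p) + e)" .
    then show ?thesis using e n0 c by (simp add: enn2real_leI)
  qed
  then have "enn2real X \<le> n * \<mu> powr (1 - 1/p)" using field_le_epsilon by blast
  then have "ennreal (enn2real X) \<le> ennreal (n * \<mu> powr (1 - 1/p))" by (rule ennreal_leI)
  then have "X \<le> ennreal (n * \<mu> powr (1 - 1/p))" using Xfin by (simp add: less_top)
  then show ?thesis by (simp add: X_def n_def \<mu>_def)
qed

definition av :: "'a measure \<Rightarrow> ('a \<Rightarrow> real) \<Rightarrow> real" where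
  "av N f = integral\<^sup>L N f / measure N (space N)"

lemma av_add: "integrable N f \<Longrightarrow> integrable N g \<Longrightarrow> av N (\<lambda>x. f x + g x) = av N f + av N g"
  by (simp add: av_def add_divide_distrib)

lemma av_scale: "av N (\<lambda>x. c * f x) = c * av N f"
  by (simp add: av_def)

lemma int_const: "emeasure N (space N) < \<infinity> \<Longrightarrow> integrable N (\<lambda>x. c::real)"
  by (rule finite_measure.integrable_const, rule finite_measureI) (simp add: less_top[symmetric])

lemma av_diff_const:
  assumes "integrable N f" "emeasure N (space N) < \<infinity>" "emeasure N (space N) > 0"
  shows "av N (\<lambda>x. f x - k) = av N f - k"
proof -
  have m: "measure N (space N) > 0" using assms by (simp add: measure_def enn2real_positive_iff less_top)
  have "integrable N (\<lambda>x. k)" using assms by (simp add: int_const)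
  then show ?thesis using assms m by (simp add: av_def diff_divide_distrib)
qed

lemma N_add:
  assumes f: "integrable N f" and g: "integrable N g" and p: "1 \<le> p"
    and Ff: "PI p N (\<lambda>x. f x - av N f) < \<infinity>" and Fg: "PI p N (\<lambda>x. g x - av N g) < \<infinity>"
  shows "PI p N (\<lambda>x. (f x + g x) - av N (\<lambda>x. f x + g x)) < \<infinity> \<and>
         nrm p N (\<lambda>x. (f x + g x) - av N (\<lambda>x. f x + g x)) \<le> nrm p N (\<lambda>x. f x - av N f) + nrm p N (\<lambda>x. g x - av N g)"
proof -
  have eq: "(\<lambda>x. (f x + g x) - av N (\<lambda>x. f x + g x)) = (\<lambda>x. (f x - av N f) + (g x - av N g))"
    using av_add[OF f g] by auto
  show ?thesis unfolding eq
    by (rule nrm_triangle) (use f g p Ff Fg in auto)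
qed

lemma N_scale:
  assumes f: "integrable N f" and p: "0 < p"
  shows "PI p N (\<lambda>x. c * f x - av N (\<lambda>x. c * f x)) = ennreal (\<bar>c\<bar> powr p) * PI p N (\<lambda>x. f x - av N f)"
    "nrm p N (\<lambda>x. c * f x - av N (\<lambda>x. c * f x)) = \<bar>c\<bar> * nrm p N (\<lambda>x. f x - av N f)"
proof -
  have eq: "(\<lambda>x. c * f x - av N (\<lambda>x. c * f x)) = (\<lambda>x. c * (f x - av N f))"
    by (auto simp: av_scale algebra_simps)
  have m: "(\<lambda>x. f x - av N f) \<in> borel_measurable N" using f by auto
  show "PI p N (\<lambda>x. c * f x - av N (\<lambda>x. c * f x)) = ennreal (\<bar>c\<bar> powr p) * PI p N (\<lambda>x. f x - av N f)"
    unfolding eq by (rule PI_scale[OF m p])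
  show "nrm p N (\<lambda>x. c * f x - av N (\<lambda>x. c * f x)) = \<bar>c\<bar> * nrm p N (\<lambda>x. f x - av N f)"
    unfolding eq by (rule nrm_scale[OF m p])
qed

lemma N_abs:
  assumes f: "integrable N f" and p: "1 \<le> p"
    and fin: "emeasure N (space N) < \<infinity>" and pos: "emeasure N (space N) > 0"
    and Ff: "PI p N (\<lambda>x. f x - av N f) < \<infinity>"
  shows "PI p N (\<lambda>x. \<bar>f x\<bar> - av N (\<lambda>x. \<bar>f x\<bar>)) < \<infinity> \<and>
         nrm p N (\<lambda>x. \<bar>f x\<bar> - av N (\<lambda>x. \<bar>f x\<bar>)) \<le> 2 * nrm p N (\<lambda>x. f x - av N f)"
proof -
  define a where "a = \<bar>av N f\<bar>"
  define h1 where "h1 = (\<lambda>x. \<bar>f x\<bar> - a)"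
  define k where "k = a - av N (\<lambda>x. \<bar>f x\<bar>)"
  define \<mu> where "\<mu> = measure N (space N)"
  have mu: "\<mu> > 0" using fin pos by (simp add: \<mu>_def measure_def enn2real_positive_iff less_top)
  have p0: "p > 0" using p by auto
  have fa: "integrable N (\<lambda>x. \<bar>f x\<bar>)" using f by auto
  have h1i: "integrable N h1" unfolding h1_def using fa fin by (intro Bochner_Integration.integrable_diff int_const)
  have h1m: "h1 \<in> borel_measurable N" using h1i by auto
  have pt: "\<bar>h1 x\<bar> \<le> \<bar>f x - av N f\<bar>" for x unfolding h1_def a_def by linarith
  have PIh1: "PI p N h1 < \<infinity>" using PI_mono[of N h1 "\<lambda>x. f x - av N f" p] pt p Ff by (auto simp: order_le_less_trans)
  have nh1: "nrm p N h1 \<le> nrm p N (\<lambda>x. f x - av N f)" using pt p Ff by (intro nrm_mono) auto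
  have avh1: "av N h1 = - k" unfolding h1_def k_def using av_diff_const[OF fa fin pos] by simp
  have "\<bar>k\<bar> * \<mu> = \<bar>integral\<^sup>L N h1\<bar>" proof -
    have "integral\<^sup>L N h1 = - k * \<mu>" using avh1 mu by (simp add: av_def \<mu>_def field_simps)
    then show ?thesis using mu by (simp add: abs_mult)
  qed
  also have "\<dots> \<le> integral\<^sup>L N (\<lambda>x. \<bar>h1 x\<bar>)" by (rule integral_abs_bound)
  also have "integral\<^sup>L N (\<lambda>x. \<bar>h1 x\<bar>) = enn2real (\<integral>\<^sup>+x. ennreal \<bar>h1 x\<bar> \<partial>N)"
    using h1i by (subst nn_integral_eq_integral) auto
  also have "\<dots> \<le> nrm p N h1 * \<mu> powr (1 - 1/p)"
    using L1_bound[OF h1m p fin pos PIh1] nrm_nonneg[of p N h1] mu unfolding \<mu>_def by (simp add: enn2real_leI)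
  finally have kb: "\<bar>k\<bar> * \<mu> \<le> nrm p N h1 * \<mu> powr (1 - 1/p)" .
  have nk: "nrm p N (\<lambda>x. k) = \<bar>k\<bar> * \<mu> powr (1/p)" using nrm_const[OF fin p0] by (simp add: \<mu>_def)
  have "\<bar>k\<bar> * \<mu> powr (1/p) = \<bar>k\<bar> * \<mu> / \<mu> powr (1 - 1/p)"
    using mu by (simp add: powr_diff)
  also have "\<dots> \<le> nrm p N h1" using kb mu by (simp add: divide_le_eq)
  finally have nk2: "nrm p N (\<lambda>x. k) \<le> nrm p N h1" using nk by simp
  have PIk: "PI p N (\<lambda>x. k) < \<infinity>" using fin by (simp add: PI_const ennreal_mult_less_top)
  have eq: "(\<lambda>x. \<bar>f x\<bar> - av N (\<lambda>x. \<bar>f x\<bar>)) = (\<lambda>x. h1 x + k)"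
    by (auto simp: h1_def k_def)
  have tri: "PI p N (\<lambda>x. h1 x + k) < \<infinity> \<and> nrm p N (\<lambda>x. h1 x + k) \<le> nrm p N h1 + nrm p N (\<lambda>x. k)"
    by (rule nrm_triangle[OF h1m _ p PIh1 PIk]) simp
  show ?thesis unfolding eq using tri nh1 nk2 by linarith
qed

definition oS :: "real \<Rightarrow> 'a::euclidean_space set \<Rightarrow> ('a \<Rightarrow> real) \<Rightarrow> real" where
  "oS p S f = enn2real (mean_osc p S f) powr (1/p)"

lemma shape_basic:
  assumes "is_shape S"
  shows "space (restrict_space lebesgue S) = S"
    "emeasure (restrict_space lebesgue S) (space (restrict_space lebesgue S)) = emeasure lebesgue S"
    "emeasure (restrict_space lebesgue S) (space (restrict_space lebesgue S)) < \<infinity>"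
    "emeasure (restrict_space lebesgue S) (space (restrict_space lebesgue S)) > 0"
    "measure (restrict_space lebesgue S) (space (restrict_space lebesgue S)) = measure lebesgue S"
    "set_integrable lebesgue S f \<longleftrightarrow> integrable (restrict_space lebesgue S) f"
    "avg S f = av (restrict_space lebesgue S) f"
    "mean_osc p S f = PI p (restrict_space lebesgue S) (\<lambda>x. f x - av (restrict_space lebesgue S) f)
        / emeasure lebesgue S"
proof -
  have Sl: "S \<in> sets lebesgue" using assms by (simp add: is_shape_def)
  then have Sl': "S \<inter> space lebesgue \<in> sets lebesgue" by simp
  show sp: "space (restrict_space lebesgue S) = S" using Sl by simp
  show em: "emeasure (restrict_space lebesgue S) (space (restrict_space lebesgue S)) = emeasure lebesgue S"
    unfolding sp by (rule emeasure_restrict_space[OF Sl']) simp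
  then show "emeasure (restrict_space lebesgue S) (space (restrict_space lebesgue S)) < \<infinity>"
    "emeasure (restrict_space lebesgue S) (space (restrict_space lebesgue S)) > 0"
    using assms by (auto simp: is_shape_def)
  show ms: "measure (restrict_space lebesgue S) (space (restrict_space lebesgue S)) = measure lebesgue S"
    using em by (simp add: measure_def)
  show "set_integrable lebesgue S f \<longleftrightarrow> integrable (restrict_space lebesgue S) f"
    unfolding set_integrable_def using integrable_restrict_space[OF Sl', of f] by simp
  show av: "avg S f = av (restrict_space lebesgue S) f"
    unfolding avg_def av_def ms set_lebesgue_integral_def using integral_restrict_space[OF Sl', of f] by simp
  show "mean_osc p S f = PI p (restrict_space lebesgue S) (\<lambda>x. f x - av (restrict_space lebesgue S) f)
        / emeasure lebesgue S"
    unfolding mean_osc_def PI_def av nn_integral_restrict_space[OF Sl'] ..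
qed

lemma oS_nonneg: "oS p S f \<ge> 0" by (simp add: oS_def)

lemma mean_osc_eq_oS:
  assumes "mean_osc p S f < \<infinity>" "p > 0"
  shows "mean_osc p S f = ennreal (oS p S f powr p)"
  using assms by (simp add: oS_def powr_powr)

lemma shape_osc:
  assumes S: "is_shape S" and p: "p > 0"
  shows "mean_osc p S f < \<infinity> \<longleftrightarrow> PI p (restrict_space lebesgue S) (\<lambda>x. f x - av (restrict_space lebesgue S) f) < \<infinity>"
    "PI p (restrict_space lebesgue S) (\<lambda>x. f x - av (restrict_space lebesgue S) f) < \<infinity> \<Longrightarrow>
      oS p S f = nrm p (restrict_space lebesgue S) (\<lambda>x. f x - av (restrict_space lebesgue S) f) / measure lebesgue S powr (1/p)"
proof -
  define X where "X = PI p (restrict_space lebesgue S) (\<lambda>x. f x - av (restrict_space lebesgue S) f)"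
  define \<mu> where "\<mu> = measure lebesgue S"
  have f1: "emeasure lebesgue S < \<infinity>" and f2: "emeasure lebesgue S > 0" using S unfolding is_shape_def by blast+
  have emS: "emeasure lebesgue S = ennreal \<mu>" unfolding \<mu>_def
    by (rule emeasure_eq_ennreal_measure) (use f1 in auto)
  have mu: "\<mu> > 0" using f2 unfolding emS by simp
  have mo: "mean_osc p S f = X / ennreal \<mu>" unfolding X_def emS[symmetric] by (rule shape_basic(8)[OF S])
  show "mean_osc p S f < \<infinity> \<longleftrightarrow> X < \<infinity>"
  proof (cases "X < \<infinity>")
    case True
    then obtain r where r: "X = ennreal r" "r \<ge> 0" by (cases X) auto
    then show ?thesis using mo mu by (simp add: divide_ennreal)
  next
    case False
    then have "X = \<infinity>" by (simp add: less_top[symmetric])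
    then show ?thesis using mo mu by (simp add: ennreal_top_divide)
  qed
  assume fin: "X < \<infinity>"
  then obtain r where r: "X = ennreal r" "r \<ge> 0" by (cases X) auto
  have "oS p S f = (r / \<mu>) powr (1/p)" unfolding oS_def mo r using mu r by (simp add: divide_ennreal)
  also have "\<dots> = r powr (1/p) / \<mu> powr (1/p)" using r mu by (simp add: powr_divide)
  also have "r powr (1/p) = nrm p (restrict_space lebesgue S) (\<lambda>x. f x - av (restrict_space lebesgue S) f)"
    unfolding nrm_def X_def[symmetric] r using r by simp
  finally show "oS p S f = nrm p (restrict_space lebesgue S) (\<lambda>x. f x - av (restrict_space lebesgue S) f) / measure lebesgue S powr (1/p)"
    by (simp add: \<mu>_def)
qed

lemma S_add:
  assumes S: "is_shape S" and p: "1 \<le> p"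
    and f: "set_integrable lebesgue S f" and g: "set_integrable lebesgue S g"
    and mf: "mean_osc p S f < \<infinity>" and mg: "mean_osc p S g < \<infinity>"
  shows "set_integrable lebesgue S (\<lambda>x. f x + g x) \<and> mean_osc p S (\<lambda>x. f x + g x) < \<infinity> \<and>
         oS p S (\<lambda>x. f x + g x) \<le> oS p S f + oS p S g"
proof -
  define N where "N = restrict_space lebesgue S"
  have p0: "p > 0" using p by auto
  have fN: "integrable N f" and gN: "integrable N g" using f g shape_basic(6)[OF S] by (auto simp: N_def)
  have fgN: "integrable N (\<lambda>x. f x + g x)" using fN gN by auto
  have Ff: "PI p N (\<lambda>x. f x - av N f) < \<infinity>" using mf shape_osc(1)[OF S p0] by (simp add: N_def)
  have Fg: "PI p N (\<lambda>x. g x - av N g) < \<infinity>" using mg shape_osc(1)[OF S p0] by (simp add: N_def)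
  note A = N_add[OF fN gN p Ff Fg]
  have c: "measure lebesgue S powr (1/p) > 0"
  proof -
    have "emeasure lebesgue S > 0" "emeasure lebesgue S < \<infinity>" using S by (auto simp: is_shape_def)
    then have "measure lebesgue S > 0" by (simp add: measure_def enn2real_positive_iff less_top)
    then show ?thesis by simp
  qed
  have "oS p S (\<lambda>x. f x + g x) = nrm p N (\<lambda>x. (f x + g x) - av N (\<lambda>x. f x + g x)) / measure lebesgue S powr (1/p)"
    using shape_osc(2)[OF S p0, of "\<lambda>x. f x + g x"] A by (simp add: N_def)
  also have "\<dots> \<le> (nrm p N (\<lambda>x. f x - av N f) + nrm p N (\<lambda>x. g x - av N g)) / measure lebesgue S powr (1/p)"
    using A c by (intro divide_right_mono) auto
  also have "\<dots> = oS p S f + oS p S g"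
    using shape_osc(2)[OF S p0, of f] shape_osc(2)[OF S p0, of g] Ff Fg by (simp add: N_def add_divide_distrib)
  finally show ?thesis using A shape_basic(6)[OF S] fgN shape_osc(1)[OF S p0, of "\<lambda>x. f x + g x"]
    by (simp add: N_def)
qed

lemma S_scale:
  assumes S: "is_shape S" and p: "1 \<le> p"
    and f: "set_integrable lebesgue S f" and mf: "mean_osc p S f < \<infinity>"
  shows "set_integrable lebesgue S (\<lambda>x. c * f x) \<and> mean_osc p S (\<lambda>x. c * f x) < \<infinity> \<and>
         oS p S (\<lambda>x. c * f x) = \<bar>c\<bar> * oS p S f"
proof -
  define N where "N = restrict_space lebesgue S"
  have p0: "p > 0" using p by auto
  have fN: "integrable N f" using f shape_basic(6)[OF S] by (auto simp: N_def)
  have cfN: "integrable N (\<lambda>x. c * f x)" using fN by auto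
  have Ff: "PI p N (\<lambda>x. f x - av N f) < \<infinity>" using mf shape_osc(1)[OF S p0] by (simp add: N_def)
  have Fc: "PI p N (\<lambda>x. c * f x - av N (\<lambda>x. c * f x)) < \<infinity>"
    unfolding N_scale(1)[OF fN p0] using Ff by (simp add: ennreal_mult_less_top)
  have "oS p S (\<lambda>x. c * f x) = nrm p N (\<lambda>x. c * f x - av N (\<lambda>x. c * f x)) / measure lebesgue S powr (1/p)"
    using shape_osc(2)[OF S p0, of "\<lambda>x. c * f x"] Fc by (simp add: N_def)
  also have "\<dots> = \<bar>c\<bar> * oS p S f"
    unfolding N_scale(2)[OF fN p0] using shape_osc(2)[OF S p0, of f] Ff by (simp add: N_def)
  finally show ?thesis using Fc shape_basic(6)[OF S] cfN shape_osc(1)[OF S p0, of "\<lambda>x. c * f x"]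
    by (simp add: N_def)
qed

lemma S_abs:
  assumes S: "is_shape S" and p: "1 \<le> p"
    and f: "set_integrable lebesgue S f" and mf: "mean_osc p S f < \<infinity>"
  shows "set_integrable lebesgue S (\<lambda>x. \<bar>f x\<bar>) \<and> mean_osc p S (\<lambda>x. \<bar>f x\<bar>) < \<infinity> \<and>
         oS p S (\<lambda>x. \<bar>f x\<bar>) \<le> 2 * oS p S f"
proof -
  define N where "N = restrict_space lebesgue S"
  have p0: "p > 0" using p by auto
  have fN: "integrable N f" using f shape_basic(6)[OF S] by (auto simp: N_def)
  have afN: "integrable N (\<lambda>x. \<bar>f x\<bar>)" using fN by auto
  have Ff: "PI p N (\<lambda>x. f x - av N f) < \<infinity>" using mf shape_osc(1)[OF S p0] by (simp add: N_def)
  have e1: "emeasure N (space N) < \<infinity>" "emeasure N (space N) > 0" using shape_basic(3,4)[OF S] by (simp_all add: N_def)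
  note A = N_abs[OF fN p e1 Ff]
  have c: "measure lebesgue S powr (1/p) > 0"
  proof -
    have "emeasure lebesgue S > 0" "emeasure lebesgue S < \<infinity>" using S by (auto simp: is_shape_def)
    then have "measure lebesgue S > 0" by (simp add: measure_def enn2real_positive_iff less_top)
    then show ?thesis by simp
  qed
  have "oS p S (\<lambda>x. \<bar>f x\<bar>) = nrm p N (\<lambda>x. \<bar>f x\<bar> - av N (\<lambda>x. \<bar>f x\<bar>)) / measure lebesgue S powr (1/p)"
    using shape_osc(2)[OF S p0, of "\<lambda>x. \<bar>f x\<bar>"] A by (simp add: N_def)
  also have "\<dots> \<le> (2 * nrm p N (\<lambda>x. f x - av N f)) / measure lebesgue S powr (1/p)"
    using A c by (intro divide_right_mono) auto
  also have "\<dots> = 2 * oS p S f"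
    using shape_osc(2)[OF S p0, of f] Ff by (simp add: N_def)
  finally show ?thesis using A shape_basic(6)[OF S] afN shape_osc(1)[OF S p0, of "\<lambda>x. \<bar>f x\<bar>"]
    by (simp add: N_def)
qed

lemma BMO_norm_oS: "BMO_norm p \<SS> f = (SUP S\<in>\<SS>. oS p S f)"
  by (simp add: BMO_norm_def oS_def)

lemma BMO_D:
  assumes "in_BMO p \<SS> f" "S \<in> \<SS>" "p > 0"
  shows "set_integrable lebesgue S f \<and> mean_osc p S f < \<infinity> \<and> oS p S f \<le> BMO_norm p \<SS> f"
proof -
  obtain C where C: "\<And>S. S \<in> \<SS> \<Longrightarrow> mean_osc p S f \<le> ennreal C"
    using assms(1) unfolding in_BMO_def by blast
  have b: "oS p T f \<le> max C 0 powr (1/p)" if T: "T \<in> \<SS>" for T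
  proof -
    have "enn2real (mean_osc p T f) \<le> enn2real (ennreal (max C 0))"
      using C[OF T] by (intro enn2real_mono) (auto simp: ennreal_max_0 max_def ennreal_neg)
    then show ?thesis unfolding oS_def using assms(3) by (intro powr_mono2) auto
  qed
  have "bdd_above ((\<lambda>S. oS p S f) ` \<SS>)" using b by (intro bdd_aboveI2) auto
  then have "oS p S f \<le> BMO_norm p \<SS> f" unfolding BMO_norm_oS using assms(2) by (rule cSUP_upper2) simp
  moreover have "mean_osc p S f < \<infinity>" using C[OF assms(2)] by (simp add: order_le_less_trans)
  ultimately show ?thesis using assms(1,2) unfolding in_BMO_def by blast
qed

lemma BMO_I:
  assumes "\<And>S. S \<in> \<SS> \<Longrightarrow> set_integrable lebesgue S f \<and> mean_osc p S f < \<infinity> \<and> oS p S f \<le> K" "p > 0"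
  shows "in_BMO p \<SS> f"
  unfolding in_BMO_def
proof (intro conjI ballI exI)
  fix S assume S: "S \<in> \<SS>"
  then show "set_integrable lebesgue S f" using assms by blast
  have "mean_osc p S f = ennreal (oS p S f powr p)" using assms S by (intro mean_osc_eq_oS) auto
  also have "\<dots> \<le> ennreal (max K 0 powr p)"
  proof -
    have "oS p S f \<le> K" using assms S by blast
    then have "oS p S f \<le> max K 0" by simp
    then show ?thesis using assms S oS_nonneg[of p S f] by (intro ennreal_leI powr_mono2) auto
  qed
  finally show "mean_osc p S f \<le> ennreal (max K 0 powr p)" .
qed

lemma BMO_norm_le:
  assumes "\<SS> \<noteq> {}" "\<And>S. S \<in> \<SS> \<Longrightarrow> oS p S f \<le> K"
  shows "BMO_norm p \<SS> f \<le> K"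
  unfolding BMO_norm_oS using assms by (intro cSUP_least) auto

lemma BMO_norm_nonneg:
  assumes "\<SS> \<noteq> {}" "in_BMO p \<SS> f" "p > 0"
  shows "BMO_norm p \<SS> f \<ge> 0"
proof -
  obtain S where "S \<in> \<SS>" using assms by auto
  then show ?thesis using BMO_D[OF assms(2) _ assms(3)] oS_nonneg[of p S f] by force
qed

lemma BMO_abs:
  assumes shp: "\<And>S. S \<in> \<SS> \<Longrightarrow> is_shape S" and ne: "\<SS> \<noteq> {}" and p: "1 \<le> p"
    and f: "in_BMO p \<SS> f"
  shows "in_BMO p \<SS> (\<lambda>x. \<bar>f x\<bar>) \<and> BMO_norm p \<SS> (\<lambda>x. \<bar>f x\<bar>) \<le> 2 * BMO_norm p \<SS> f"
proof -
  have p0: "p > 0" using p by auto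
  have *: "set_integrable lebesgue S (\<lambda>x. \<bar>f x\<bar>) \<and> mean_osc p S (\<lambda>x. \<bar>f x\<bar>) < \<infinity> \<and>
      oS p S (\<lambda>x. \<bar>f x\<bar>) \<le> 2 * BMO_norm p \<SS> f" if S: "S \<in> \<SS>" for S
    using S_abs[OF shp[OF S] p, of f] BMO_D[OF f S p0] by auto
  show ?thesis using BMO_I[OF * p0] BMO_norm_le[OF ne, of p "\<lambda>x. \<bar>f x\<bar>"] * by blast
qed

lemma c_abs_prop:
  assumes shp: "\<And>S. S \<in> \<SS> \<Longrightarrow> is_shape S" and ne: "\<SS> \<noteq> {}" and p: "1 \<le> p"
  shows "in_BMO p \<SS> f \<Longrightarrow> BMO_norm p \<SS> (\<lambda>x. \<bar>f x\<bar>) \<le> c_abs p \<SS> * BMO_norm p \<SS> f"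
    and "in_BMO p \<SS> h \<Longrightarrow> BMO_norm p \<SS> h > 0 \<Longrightarrow> c_abs p \<SS> \<ge> 0"
proof -
  have p0: "p > 0" using p by auto
  define C where "C = {c. \<forall>f. in_BMO p \<SS> f \<longrightarrow> BMO_norm p \<SS> (\<lambda>x. \<bar>f x\<bar>) \<le> c * BMO_norm p \<SS> f}"
  have cdef: "c_abs p \<SS> = Inf C" by (simp add: c_abs_def C_def)
  have C2: "2 \<in> C" unfolding C_def using BMO_abs[OF shp ne p] by blast
  then have Cne: "C \<noteq> {}" by auto
  have lb: "BMO_norm p \<SS> (\<lambda>x. \<bar>f x\<bar>) / BMO_norm p \<SS> f \<le> c_abs p \<SS>"
    if f: "in_BMO p \<SS> f" and pos: "BMO_norm p \<SS> f > 0" for f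
    unfolding cdef
  proof (rule cInf_greatest[OF Cne])
    fix c assume "c \<in> C"
    then have "BMO_norm p \<SS> (\<lambda>x. \<bar>f x\<bar>) \<le> c * BMO_norm p \<SS> f" using f unfolding C_def by blast
    then show "BMO_norm p \<SS> (\<lambda>x. \<bar>f x\<bar>) / BMO_norm p \<SS> f \<le> c" using pos by (simp add: divide_le_eq)
  qed
  show "c_abs p \<SS> \<ge> 0" if h: "in_BMO p \<SS> h" and pos: "BMO_norm p \<SS> h > 0"
  proof -
    have "0 \<le> BMO_norm p \<SS> (\<lambda>x. \<bar>h x\<bar>)" using BMO_abs[OF shp ne p h] BMO_norm_nonneg[OF ne _ p0] by blast
    then have "0 \<le> BMO_norm p \<SS> (\<lambda>x. \<bar>h x\<bar>) / BMO_norm p \<SS> h" using pos by simp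
    then show ?thesis using lb[OF h pos] by linarith
  qed
  show "BMO_norm p \<SS> (\<lambda>x. \<bar>f x\<bar>) \<le> c_abs p \<SS> * BMO_norm p \<SS> f" if f: "in_BMO p \<SS> f"
  proof (cases "BMO_norm p \<SS> f > 0")
    case True
    then show ?thesis using lb[OF f True] by (simp add: divide_le_eq mult.commute)
  next
    case False
    then have "BMO_norm p \<SS> f = 0" using BMO_norm_nonneg[OF ne f p0] by linarith
    then show ?thesis using BMO_abs[OF shp ne p f] by simp
  qed
qed

theorem proposition6p1:
  fixes \<Omega> :: "'a::euclidean_space set" and \<SS> :: "'a set set"
    and p :: real and f1 f2 :: "'a \<Rightarrow> real"
  assumes "is_domain \<Omega>" and "basis_of_shapes \<SS> \<Omega>"
    and "1 \<le> p"
    and "in_BMO p \<SS> f1" and "in_BMO p \<SS> f2"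
  shows "in_BMO p \<SS> (\<lambda>x. max (f1 x) (f2 x))
    \<and> in_BMO p \<SS> (\<lambda>x. min (f1 x) (f2 x))
    \<and> BMO_norm p \<SS> (\<lambda>x. max (f1 x) (f2 x))
           \<le> (1 + c_abs p \<SS>) / 2 * (BMO_norm p \<SS> f1 + BMO_norm p \<SS> f2)
    \<and> BMO_norm p \<SS> (\<lambda>x. min (f1 x) (f2 x))
           \<le> (1 + c_abs p \<SS>) / 2 * (BMO_norm p \<SS> f1 + BMO_norm p \<SS> f2)"
proof -
  note p = assms(3) and f1 = assms(4) and f2 = assms(5)
  have p0: "p > 0" using p by auto
  have shp: "\<And>S. S \<in> \<SS> \<Longrightarrow> is_shape S" using assms(2) by (auto simp: basis_of_shapes_def)
  have ne: "\<SS> \<noteq> {}" using assms(1,2) by (auto simp: basis_of_shapes_def is_domain_def)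
  define N1 where "N1 = BMO_norm p \<SS> f1"
  define N2 where "N2 = BMO_norm p \<SS> f2"
  have N1: "N1 \<ge> 0" and N2: "N2 \<ge> 0" using BMO_norm_nonneg[OF ne _ p0] f1 f2 by (auto simp: N1_def N2_def)
  define g where "g = (\<lambda>x. f1 x + (-1) * f2 x)"
  define s where "s = (\<lambda>x. f1 x + f2 x)"
  define ag where "ag = (\<lambda>x. \<bar>g x\<bar>)"
  have per: "set_integrable lebesgue S s \<and> mean_osc p S s < \<infinity> \<and> oS p S s \<le> N1 + N2
    \<and> set_integrable lebesgue S g \<and> mean_osc p S g < \<infinity> \<and> oS p S g \<le> N1 + N2"
    if S: "S \<in> \<SS>" for S
  proof -
    note d1 = BMO_D[OF f1 S p0] and d2 = BMO_D[OF f2 S p0]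
    note sc = S_scale[OF shp[OF S] p, of f2 "-1"]
    have "set_integrable lebesgue S s \<and> mean_osc p S s < \<infinity> \<and> oS p S s \<le> oS p S f1 + oS p S f2"
      unfolding s_def using S_add[OF shp[OF S] p, of f1 f2] d1 d2 by blast
    moreover have "set_integrable lebesgue S g \<and> mean_osc p S g < \<infinity> \<and> oS p S g \<le> oS p S f1 + oS p S f2"
      unfolding g_def using S_add[OF shp[OF S] p, of f1 "\<lambda>x. (-1) * f2 x"] d1 d2 sc by auto
    ultimately show ?thesis using d1 d2 by (auto simp: N1_def N2_def)
  qed
  have gB: "in_BMO p \<SS> g" using per by (intro BMO_I[OF _ p0]) blast
  have sB: "in_BMO p \<SS> s" using per by (intro BMO_I[OF _ p0]) blast
  have G: "BMO_norm p \<SS> g \<le> N1 + N2" using per by (intro BMO_norm_le[OF ne]) blast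
  have Sn: "BMO_norm p \<SS> s \<le> N1 + N2" using per by (intro BMO_norm_le[OF ne]) blast
  have G0: "BMO_norm p \<SS> g \<ge> 0" using BMO_norm_nonneg[OF ne gB p0] .
  have agB: "in_BMO p \<SS> ag" using BMO_abs[OF shp ne p gB] by (simp add: ag_def)
  define A where "A = BMO_norm p \<SS> ag"
  have Ac: "A \<le> c_abs p \<SS> * BMO_norm p \<SS> g" using c_abs_prop(1)[OF shp ne p gB] by (simp add: A_def ag_def)
  define c where "c = c_abs p \<SS>"
  have key: "(N1 + N2) / 2 + A / 2 \<le> (1 + c) / 2 * (N1 + N2)"
  proof (cases "c \<ge> 0")
    case True
    have "A \<le> c * (N1 + N2)" using Ac G True unfolding c_def by (meson mult_left_mono order_trans)
    then show ?thesis by (simp add: field_simps)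
  next
    case False
    then have "N1 = 0" using c_abs_prop(2)[OF shp ne p f1] N1 unfolding c_def N1_def by force
    moreover have "N2 = 0" using c_abs_prop(2)[OF shp ne p f2] N2 False unfolding c_def N2_def by force
    ultimately have "BMO_norm p \<SS> g = 0" using G G0 by simp
    then have "A \<le> 0" using Ac by simp
    then show ?thesis using \<open>N1 = 0\<close> \<open>N2 = 0\<close> by simp
  qed
  have comb: "set_integrable lebesgue S (\<lambda>x. (1/2) * s x + d * ag x) \<and> mean_osc p S (\<lambda>x. (1/2) * s x + d * ag x) < \<infinity>
     \<and> oS p S (\<lambda>x. (1/2) * s x + d * ag x) \<le> (1 + c) / 2 * (N1 + N2)"
    if S: "S \<in> \<SS>" and d: "\<bar>d\<bar> = 1/2" for S d
  proof -
    note ps = per[OF S]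
    note a1 = S_scale[OF shp[OF S] p, of s "1/2"]
    have ag1: "set_integrable lebesgue S ag \<and> mean_osc p S ag < \<infinity> \<and> oS p S ag \<le> A"
      using BMO_D[OF agB S p0] by (simp add: A_def)
    note a2 = S_scale[OF shp[OF S] p, of ag d]
    note a3 = S_add[OF shp[OF S] p, of "\<lambda>x. (1/2) * s x" "\<lambda>x. d * ag x"]
    have "oS p S (\<lambda>x. (1/2) * s x + d * ag x) \<le> (1/2) * oS p S s + (1/2) * oS p S ag"
      using a1 a2 a3 ps ag1 d by auto
    also have "\<dots> \<le> (N1 + N2) / 2 + A / 2"
    proof -
      have "oS p S s \<le> N1 + N2" "oS p S ag \<le> A" using ps ag1 by auto
      then show ?thesis by (simp add: field_simps)
    qed
    also have "\<dots> \<le> (1 + c) / 2 * (N1 + N2)" by (rule key)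
    finally show ?thesis using a1 a2 a3 ps ag1 by auto
  qed
  have emax: "(\<lambda>x. max (f1 x) (f2 x)) = (\<lambda>x. (1/2) * s x + (1/2) * ag x)"
    by (rule ext) (simp add: s_def ag_def g_def max_def abs_if field_simps)
  have emin: "(\<lambda>x. min (f1 x) (f2 x)) = (\<lambda>x. (1/2) * s x + (-1/2) * ag x)"
    by (rule ext) (simp add: s_def ag_def g_def min_def abs_if field_simps)
  have r1: "in_BMO p \<SS> (\<lambda>x. max (f1 x) (f2 x))" unfolding emax
    using comb[of _ "1/2"] by (intro BMO_I[OF _ p0, where K="(1 + c) / 2 * (N1 + N2)"]) auto
  have r2: "in_BMO p \<SS> (\<lambda>x. min (f1 x) (f2 x))" unfolding emin
    using comb[of _ "-1/2"] by (intro BMO_I[OF _ p0, where K="(1 + c) / 2 * (N1 + N2)"]) auto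
  have r3: "BMO_norm p \<SS> (\<lambda>x. max (f1 x) (f2 x)) \<le> (1 + c) / 2 * (N1 + N2)" unfolding emax
    using comb[of _ "1/2"] by (intro BMO_norm_le[OF ne]) auto
  have r4: "BMO_norm p \<SS> (\<lambda>x. min (f1 x) (f2 x)) \<le> (1 + c) / 2 * (N1 + N2)" unfolding emin
    using comb[of _ "-1/2"] by (intro BMO_norm_le[OF ne]) auto
  show ?thesis using r1 r2 r3 r4 by (simp add: c_def N1_def N2_def)
qed
end
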